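(* Assume the standing setting. Let $\epsilon>0$, fix a coarse index $j\in\mathbb Z$ and an integer $m$ with $1\le m\le r$. There exists $\delta>0$ such that if $|u^0_i-u^0_{i+1}|\le\delta$ for all $i\in\mathbb Z$, then $$|v_m-u_m|\le \tfrac32 h+\tfrac34|d_1+d_2|+\epsilon .$$
   Context: Standing setting. Let $F:\mathbb R\to\mathbb R$ be continuously differentiable. For a spatial step $\eta>0$, a time step $\tau>0$ and an initial sequence $(z^0_i)_{i\in\mathbb Z}$ of reals, the EFC (Euler forward in time, centered in space) scheme produces $(z^n_i)_{i\in\mathbb Z,\,n\in\mathbb N}$ by $z^{n+1}_i=z^n_i-F'(z^n_i)\frac{\tau}{2\eta}\,(z^n_{i+1}-z^n_{i-1})$. It satisfies the CFL condition if $|F'(z^n_i)|\,\tau/\eta\le 1$ for all $i\in\mathbb Z$, $n\in\mathbb N$. Fix $a\in\mathbb R$, $h>0$, $\Delta t>0$, an integer $N>1$ and an even integer $r\ge 2$; put $k=h/r$, $dt=\Delta t/r$, $M=Nr$. Let $u_0:\mathbb R\to\mathbb R$. The coarse solution $(w^n_j)$ is the EFC scheme with $\eta=h$, $\tau=\Delta t$, $w^0_j=u_0(a+jh)$; the fine solution $(u^n_i)$ is the EFC scheme with $\eta=k$, $\tau=dt$, $u^0_i=u_0(a+ik)$ (so $w^0_j=u^0_{jr}$). Both are assumed to satisfy the CFL condition. Coarse nodes: $x_j=a+jh$. Interpolant: for a fixed coarse index $j$, set $p_1=x_j$, $p_2=x_{j+1}$, $d_1=w^N_j$, $d_2=w^N_{j+1}$,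 let $q$ be the cubic with $q(0)=p_1$, $q(1)=p_2$, $q'(0)=d_1$, $q'(1)=d_2$, and let $v(t)=q'(t)=(6p_1-6p_2+3d_1+3d_2)t^2+(-6p_1+6p_2-4d_1-2d_2)t+d_1$ for $t\in[0,1]$. For $0\le m\le r$ put $v_m=v(m/r)$ and $u_m=u^M_{jr+m}$ (the fine solution at time step $M$ at the fine node $x_j+mk$). *)

theory Defs
  imports Complex_Main
begin

text \<open>EFC scheme (Euler forward in time, centered in space).
  Fd is the derivative F' of the flux; eta is the spatial step, tau the time step,
  z0 the initial sequence. efc Fd eta tau z0 n i is z^n_i.\<close>
fun efc :: "(real \<Rightarrow> real) \<Rightarrow> real \<Rightarrow> real \<Rightarrow> (int \<Rightarrow> real) \<Rightarrow> nat \<Rightarrow> int \<Rightarrow> real" where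
  "efc Fd eta tau z0 0 i = z0 i"
| "efc Fd eta tau z0 (Suc n) i =
     efc Fd eta tau z0 n i
     - Fd (efc Fd eta tau z0 n i) * (tau / (2 * eta))
       * (efc Fd eta tau z0 n (i + 1) - efc Fd eta tau z0 n (i - 1))"

definition cfl :: "(real \<Rightarrow> real) \<Rightarrow> real \<Rightarrow> real \<Rightarrow> (int \<Rightarrow> real) \<Rightarrow> bool" where
  "cfl Fd eta tau z0 \<longleftrightarrow> (\<forall>n i. \<bar>Fd (efc Fd eta tau z0 n i)\<bar> * tau / eta \<le> 1)"

text \<open>Derivative of the cubic Hermite interpolant q with q(0)=p1, q(1)=p2, q'(0)=d1, q'(1)=d2.\<close>
definition interp_v :: "real \<Rightarrow> real \<Rightarrow> real \<Rightarrow> real \<Rightarrow> real \<Rightarrow> real" where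
  "interp_v p1 p2 d1 d2 t =
     (6*p1 - 6*p2 + 3*d1 + 3*d2) * t^2 + (-6*p1 + 6*p2 - 4*d1 - 2*d2) * t + d1"

end

theory Submission
  imports Defs
begin

lemma efc_step:
  assumes c: "cfl Fd eta tau z0" and e: "eta > 0" and t: "tau > 0"
    and B: "\<forall>i. \<bar>efc Fd eta tau z0 n (i+1) - efc Fd eta tau z0 n i\<bar> \<le> B"
  shows "\<bar>efc Fd eta tau z0 (Suc n) i - efc Fd eta tau z0 n i\<bar> \<le> B"
proof -
  let ?x = "efc Fd eta tau z0 n"
  have cf: "\<bar>Fd (?x i)\<bar> * tau / eta \<le> 1" using c unfolding cfl_def by blast
  have q: "\<bar>Fd (?x i) * (tau / (2 * eta))\<bar> \<le> 1/2"
    using cf e t by (simp add: abs_mult field_simps)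
  have d: "\<bar>?x (i+1) - ?x (i - 1)\<bar> \<le> 2*B"
  proof -
    have "\<bar>?x (i+1) - ?x i\<bar> \<le> B" using B by blast
    moreover have "\<bar>?x (i - 1 + 1) - ?x (i - 1)\<bar> \<le> B" using B by blast
    ultimately show ?thesis by simp
  qed
  have "\<bar>efc Fd eta tau z0 (Suc n) i - ?x i\<bar> = \<bar>Fd (?x i) * (tau / (2 * eta))\<bar> * \<bar>?x (i+1) - ?x (i - 1)\<bar>"
    by (simp add: abs_mult)
  also have "\<dots> \<le> 1/2 * (2*B)" by (rule mult_mono[OF q d]) auto
  finally show ?thesis by simp
qed

lemma efc_diff:
  assumes c: "cfl Fd eta tau z0" and e: "eta > 0" and t: "tau > 0"
    and D: "\<forall>i. \<bar>z0 (i+1) - z0 i\<bar> \<le> D"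
  shows "\<forall>i. \<bar>efc Fd eta tau z0 n (i+1) - efc Fd eta tau z0 n i\<bar> \<le> 3^n * D"
proof (induction n)
  case 0 then show ?case using D by simp
next
  case (Suc n)
  show ?case
  proof
    fix i
    let ?x = "efc Fd eta tau z0 n" and ?y = "efc Fd eta tau z0 (Suc n)"
    have a1: "\<bar>?y (i+1) - ?x (i+1)\<bar> \<le> 3^n*D" by (rule efc_step[OF c e t Suc])
    have a2: "\<bar>?y i - ?x i\<bar> \<le> 3^n*D" by (rule efc_step[OF c e t Suc])
    have a3: "\<bar>?x (i+1) - ?x i\<bar> \<le> 3^n*D" using Suc by blast
    show "\<bar>?y (i+1) - ?y i\<bar> \<le> 3^Suc n * D" using a1 a2 a3 by (simp del: efc.simps)
  qed
qed

lemma efc_drift: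
  assumes c: "cfl Fd eta tau z0" and e: "eta > 0" and t: "tau > 0"
    and D: "\<forall>i. \<bar>z0 (i+1) - z0 i\<bar> \<le> D"
  shows "\<bar>efc Fd eta tau z0 n i - z0 i\<bar> \<le> real n * 3^n * D"
proof (induction n)
  case 0 then show ?case by simp
next
  case (Suc n)
  have D0: "0 \<le> D" using D by (meson abs_ge_zero order_trans)
  have "\<bar>efc Fd eta tau z0 (Suc n) i - efc Fd eta tau z0 n i\<bar> \<le> 3^n*D"
    by (rule efc_step[OF c e t efc_diff[OF c e t D]])
  hence "\<bar>efc Fd eta tau z0 (Suc n) i - z0 i\<bar> \<le> real n * 3^n * D + 3^n * D" using Suc by (simp del: efc.simps)
  also have "\<dots> \<le> real (Suc n) * 3^Suc n * D" using D0
    by (simp add: algebra_simps mult_left_mono mult_right_mono)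
  finally show ?case .
qed

lemma init_spread:
  assumes D: "\<forall>i. \<bar>z0 (i+1) - z0 i\<bar> \<le> (D::real)"
  shows "\<bar>z0 (i + int p) - z0 i\<bar> \<le> real p * D"
proof (induction p)
  case 0 then show ?case by simp
next
  case (Suc p)
  have "\<bar>z0 (i + int p + 1) - z0 (i + int p)\<bar> \<le> D" using D by blast
  then show ?case using Suc by (simp add: algebra_simps)
qed



theorem corollary3:
  fixes F Fd :: "real \<Rightarrow> real" and a h \<Delta>t \<epsilon> :: real and N r m :: nat and j :: int
  assumes F_deriv: "\<And>x. (F has_real_derivative Fd x) (at x)"
    and Fd_cont: "continuous_on UNIV Fd"
    and h_pos: "h > 0" and dt_pos: "\<Delta>t > 0"
    and N_gt: "N > 1" and r_even: "even r" and r_ge: "r \<ge> 2"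
    and eps_pos: "\<epsilon> > 0"
    and m_ge: "1 \<le> m" and m_le: "m \<le> r"
  shows "\<exists>\<delta>>0. \<forall>u0 :: real \<Rightarrow> real.
    (let k = h / real r; dt = \<Delta>t / real r; M = N * r;
         w = efc Fd h \<Delta>t (\<lambda>jj. u0 (a + real_of_int jj * h));
         u = efc Fd k dt (\<lambda>i. u0 (a + real_of_int i * k));
         p1 = a + real_of_int j * h; p2 = a + real_of_int (j + 1) * h;
         d1 = w N j; d2 = w N (j + 1);
         v_m = interp_v p1 p2 d1 d2 (real m / real r);
         u_m = u M (j * int r + int m)
     in (cfl Fd h \<Delta>t (\<lambda>jj. u0 (a + real_of_int jj * h))
         \<and> cfl Fd k dt (\<lambda>i. u0 (a + real_of_int i * k))
         \<and> (\<forall>i::int. \<bar>u0 (a + real_of_int i * k) - u0 (a + real_of_int (i + 1) * k)\<bar> \<le> \<delta>))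
        \<longrightarrow> \<bar>v_m - u_m\<bar> \<le> 3/2 * h + 3/4 * \<bar>d1 + d2\<bar> + \<epsilon>)"
proof -
  define K where "K = real (N*r) * 3^(N*r) + 2 * real r + 2 * real N * 3^N * real r + 1"
  have K0: "K > 0" unfolding K_def by (intro add_nonneg_pos) auto
  define \<delta> where "\<delta> = \<epsilon> / K"
  have d0: "\<delta> > 0" using K0 eps_pos by (simp add: \<delta>_def)
  have r0: "real r > 0" using r_ge by simp
  show ?thesis
  proof (intro exI[of _ \<delta>] conjI d0 allI)
    fix u0 :: "real \<Rightarrow> real"
    define k where "k = h / real r"
    define dt where "dt = \<Delta>t / real r"
    define zf where "zf = (\<lambda>i::int. u0 (a + real_of_int i * k))"
    define zc where "zc = (\<lambda>jj::int. u0 (a + real_of_int jj * h))"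
    have zcf: "zc jj = zf (jj * int r)" for jj
      unfolding zc_def zf_def k_def using r0 by simp
    have k0: "k > 0" using h_pos r0 by (simp add: k_def)
    have dt0: "dt > 0" using dt_pos r0 by (simp add: dt_def)
    define M where "M = N * r"
    define d1 where "d1 = efc Fd h \<Delta>t zc N j"
    define d2 where "d2 = efc Fd h \<Delta>t zc N (j+1)"
    define um where "um = efc Fd k dt zf M (j * int r + int m)"
    define t where "t = real m / real r"
    have t01: "0 \<le> t" "t \<le> 1" using m_le r0 by (auto simp: t_def)
    have main: "\<bar>interp_v (a + real_of_int j * h) (a + real_of_int (j + 1) * h) d1 d2 t - um\<bar>
        \<le> 3/2 * h + 3/4 * \<bar>d1 + d2\<bar> + \<epsilon>"
      if cc: "cfl Fd h \<Delta>t zc" and cf: "cfl Fd k dt zf"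
        and dl: "\<forall>i::int. \<bar>zf i - zf (i + 1)\<bar> \<le> \<delta>"
    proof -
      have Df: "\<forall>i. \<bar>zf (i+1) - zf i\<bar> \<le> \<delta>" using dl by (simp add: abs_minus_commute)
      have Dc: "\<forall>i. \<bar>zc (i+1) - zc i\<bar> \<le> real r * \<delta>"
      proof
        fix i
        have "\<bar>zf (i * int r + int r) - zf (i * int r)\<bar> \<le> real r * \<delta>" by (rule init_spread[OF Df])
        thus "\<bar>zc (i+1) - zc i\<bar> \<le> real r * \<delta>" by (simp add: zcf algebra_simps)
      qed
      have e1: "\<bar>um - zf (j * int r + int m)\<bar> \<le> real M * 3^M * \<delta>"
        unfolding um_def by (rule efc_drift[OF cf k0 dt0 Df])
      have e2: "\<bar>zf (j * int r + int m) - zf (j * int r)\<bar> \<le> real m * \<delta>" by (rule init_spread[OF Df])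
      have e3: "\<bar>d1 - zc j\<bar> \<le> real N * 3^N * (real r * \<delta>)"
        unfolding d1_def by (rule efc_drift[OF cc h_pos dt_pos Dc])
      have e4: "\<bar>d2 - zc (j+1)\<bar> \<le> real N * 3^N * (real r * \<delta>)"
        unfolding d2_def by (rule efc_drift[OF cc h_pos dt_pos Dc])
      have e5: "\<bar>zc (j+1) - zc j\<bar> \<le> real r * \<delta>" using Dc by blast
      have mr: "real m * \<delta> \<le> real r * \<delta>" using m_le d0 by (simp add: mult_right_mono)
      have Kd: "K * \<delta> = \<epsilon>" using K0 by (simp add: \<delta>_def)
      have KK: "K * \<delta> = real M * 3^M * \<delta> + 2 * (real r * \<delta>) + 2 * (real N * 3^N * (real r * \<delta>)) + \<delta>"
        unfolding K_def M_def by (simp add: algebra_simps)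
      have b1: "\<bar>d1 - um\<bar> \<le> \<epsilon>"
        using e1 e2 e3 mr KK Kd d0 zcf[of j] by linarith
      have b2: "\<bar>d2 - um\<bar> \<le> \<epsilon>"
        using e1 e2 e4 e5 mr KK Kd d0 zcf[of j] by linarith
      define s where "s = t - t^2"
      have s0a: "0 \<le> s" using t01 mult_left_le_one_le[of t t] unfolding s_def by (simp add: power2_eq_square)
      have s0b: "s \<le> 1/4"
      proof -
        have "1/4 - s = (t - 1/2)^2" by (simp add: s_def power2_eq_square algebra_simps)
        moreover have "(t - 1/2)^2 \<ge> 0" by simp
        ultimately show ?thesis by linarith
      qed
      note s0 = s0a s0b
      have eq: "interp_v (a + real_of_int j * h) (a + real_of_int (j + 1) * h) d1 d2 t - um
          = 6*h*s - 3*(d1+d2)*s + ((1-t)*(d1-um) + t*(d2-um))"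
        unfolding interp_v_def s_def by (simp add: algebra_simps power2_eq_square)
      have f1: "\<bar>6*h*s - 3*(d1+d2)*s\<bar> \<le> 3/2*h + 3/4*\<bar>d1+d2\<bar>"
      proof -
        have "\<bar>6*h*s - 3*(d1+d2)*s\<bar> \<le> 6*h*s + 3*\<bar>d1+d2\<bar>*s"
          proof -
          have "\<bar>6*h*s - 3*(d1+d2)*s\<bar> \<le> \<bar>6*h*s\<bar> + \<bar>3*(d1+d2)*s\<bar>" by (rule abs_triangle_ineq4)
          also have "\<bar>6*h*s\<bar> = 6*h*s" using s0 h_pos by simp
          also have "\<bar>3*(d1+d2)*s\<bar> = 3*\<bar>d1+d2\<bar>*s" by (simp only: abs_mult abs_of_nonneg[OF s0a] abs_numeral)
          finally show ?thesis .
        qed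
        also have "\<dots> \<le> 6*h*(1/4) + 3*\<bar>d1+d2\<bar>*(1/4)"
          using s0 h_pos by (intro add_mono mult_left_mono) auto
        finally show ?thesis by simp
      qed
      have f2: "\<bar>(1-t)*(d1-um) + t*(d2-um)\<bar> \<le> \<epsilon>"
      proof -
        have "\<bar>(1-t)*(d1-um) + t*(d2-um)\<bar> \<le> (1-t)*\<bar>d1-um\<bar> + t*\<bar>d2-um\<bar>"
          proof -
          have "\<bar>(1-t)*(d1-um) + t*(d2-um)\<bar> \<le> \<bar>(1-t)*(d1-um)\<bar> + \<bar>t*(d2-um)\<bar>" by (rule abs_triangle_ineq)
          also have "\<bar>(1-t)*(d1-um)\<bar> = (1-t)*\<bar>d1-um\<bar>" using t01 by (simp add: abs_mult)
          also have "\<bar>t*(d2-um)\<bar> = t*\<bar>d2-um\<bar>" using t01 by (simp add: abs_mult)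
          finally show ?thesis .
        qed
        also have "\<dots> \<le> (1-t)*\<epsilon> + t*\<epsilon>"
          using t01 b1 b2 by (intro add_mono mult_left_mono) auto
        finally show ?thesis by (simp add: algebra_simps)
      qed
      show ?thesis unfolding eq using f1 f2 by linarith
    qed
    show "let k = h / real r; dt = \<Delta>t / real r; M = N * r;
         w = efc Fd h \<Delta>t (\<lambda>jj. u0 (a + real_of_int jj * h));
         u = efc Fd k dt (\<lambda>i. u0 (a + real_of_int i * k));
         p1 = a + real_of_int j * h; p2 = a + real_of_int (j + 1) * h;
         d1 = w N j; d2 = w N (j + 1);
         v_m = interp_v p1 p2 d1 d2 (real m / real r);
         u_m = u M (j * int r + int m)
     in (cfl Fd h \<Delta>t (\<lambda>jj. u0 (a + real_of_int jj * h))
         \<and> cfl Fd k dt (\<lambda>i. u0 (a + real_of_int i * k))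
         \<and> (\<forall>i::int. \<bar>u0 (a + real_of_int i * k) - u0 (a + real_of_int (i + 1) * k)\<bar> \<le> \<delta>))
        \<longrightarrow> \<bar>v_m - u_m\<bar> \<le> 3/2 * h + 3/4 * \<bar>d1 + d2\<bar> + \<epsilon>"
      unfolding Let_def
      apply (intro impI)
      apply (elim conjE)
      using main[unfolded k_def dt_def zf_def zc_def d1_def d2_def M_def um_def t_def]
      by blast
  qed
qed

end
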